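(* For all integers $1\le t\le n$, the $t$-path ideal $I=I_t(L_n)$ is normal, i.e. $\overline{I^s}=I^s$ for all $s\ge 1$ (where $\overline{J}$ denotes the integral closure of $J$).
   Context: $K$ is a field, $S=K[x_1,\ldots,x_n]$, and $I_t(L_n)=(u_1,\ldots,u_{n-t+1})$ with $u_i=x_ix_{i+1}\cdots x_{i+t-1}$ (the $t$-path ideal of the line graph $L_n$ with edges $\{x_j,x_{j+1}\}$). *)

theory Defs
  imports Main "HOL-Library.Poly_Mapping"
begin

text \<open>Multivariate polynomials over a coefficient ring: finitely supported maps from
monomials (exponent vectors, nat \<Rightarrow>0 nat) to coefficients; multiplication is convolution.\<close>
type_synonym 'a mpoly = "(nat \<Rightarrow>\<^sub>0 nat) \<Rightarrow>\<^sub>0 'a"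

definition Var :: "nat \<Rightarrow> 'a::comm_ring_1 mpoly" where
  "Var i = Poly_Mapping.single (Poly_Mapping.single i 1) 1"

definition polyring :: "nat \<Rightarrow> 'a::comm_ring_1 mpoly set" where
  "polyring n = {p :: 'a mpoly. \<forall>m \<in> Poly_Mapping.keys p. Poly_Mapping.keys m \<subseteq> {1..n}}"

definition ideal_gen :: "'a::comm_ring_1 mpoly set \<Rightarrow> 'a mpoly set \<Rightarrow> 'a mpoly set" where
  "ideal_gen R G = {(\<Sum>i<k. r i * g i) | (k::nat) r g. \<forall>i<k. r i \<in> R \<and> g i \<in> G}"

definition ideal_prod :: "'a::comm_ring_1 mpoly set \<Rightarrow> 'a mpoly set \<Rightarrow> 'a mpoly set \<Rightarrow> 'a mpoly set" where
  "ideal_prod R I J = ideal_gen R {a * b | a b. a \<in> I \<and> b \<in> J}"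

fun ideal_pow :: "'a::comm_ring_1 mpoly set \<Rightarrow> 'a mpoly set \<Rightarrow> nat \<Rightarrow> 'a mpoly set" where
  "ideal_pow R I 0 = R"
| "ideal_pow R I (Suc s) = ideal_prod R (ideal_pow R I s) I"

definition int_closure :: "'a::comm_ring_1 mpoly set \<Rightarrow> 'a mpoly set \<Rightarrow> 'a mpoly set" where
  "int_closure R J = {f \<in> R. \<exists>m\<ge>1. \<exists>a. (\<forall>i\<in>{1..m}. a i \<in> ideal_pow R J i) \<and>
       f ^ m + (\<Sum>i=1..m. a i * f ^ (m - i)) = 0}"

definition path_gens :: "nat \<Rightarrow> nat \<Rightarrow> 'a::comm_ring_1 mpoly set" where
  "path_gens n t = {(\<Prod>j\<in>{i..i+t-1}. Var j) | i. 1 \<le> i \<and> i \<le> n - t + 1}"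

definition path_ideal :: "nat \<Rightarrow> nat \<Rightarrow> 'a::comm_ring_1 mpoly set" where
  "path_ideal n t = ideal_gen (polyring n) (path_gens n t)"

end

theory Submission
  imports Defs
begin


lemma ideal_gen_zero: "0 \<in> ideal_gen R G"
  unfolding ideal_gen_def by (rule CollectI, rule exI[of _ 0]) auto

lemma ideal_gen_gen: "1 \<in> R \<Longrightarrow> g \<in> G \<Longrightarrow> g \<in> ideal_gen R G"
  unfolding ideal_gen_def
  by (rule CollectI, rule exI[of _ 1], rule exI[of _ "\<lambda>_. 1"], rule exI[of _ "\<lambda>_. g"]) auto

lemma ideal_gen_add:
  assumes "x \<in> ideal_gen R G" "y \<in> ideal_gen R G"
  shows "x + y \<in> ideal_gen R G"
proof -
  from assms(1) obtain k :: nat and r g where x: "x = (\<Sum>i<k. r i * g i)" "\<forall>i<k. r i \<in> R \<and> g i \<in> G"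
    unfolding ideal_gen_def by blast
  from assms(2) obtain k' :: nat and r' g' where y: "y = (\<Sum>i<k'. r' i * g' i)" "\<forall>i<k'. r' i \<in> R \<and> g' i \<in> G"
    unfolding ideal_gen_def by blast
  define R2 where "R2 = (\<lambda>i. if i < k then r i else r' (i - k))"
  define G2 where "G2 = (\<lambda>i. if i < k then g i else g' (i - k))"
  have "(\<Sum>i<k+k'. R2 i * G2 i) = (\<Sum>i<k. R2 i * G2 i) + (\<Sum>i=k..<k+k'. R2 i * G2 i)"
    using sum.atLeastLessThan_concat[of 0 k "k+k'" "\<lambda>i. R2 i * G2 i"] by (simp add: atLeast0LessThan)
  also have "(\<Sum>i<k. R2 i * G2 i) = x" using x by (simp add: R2_def G2_def)
  also have "(\<Sum>i=k..<k+k'. R2 i * G2 i) = (\<Sum>i<k'. R2 (i+k) * G2 (i+k))"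
    using sum.shift_bounds_nat_ivl[of "\<lambda>i. R2 i * G2 i" 0 k k'] by (simp add: atLeast0LessThan add.commute)
  also have "\<dots> = y" using y by (simp add: R2_def G2_def)
  finally have e: "x + y = (\<Sum>i<k+k'. R2 i * G2 i)" by simp
  have "\<forall>i<k+k'. R2 i \<in> R \<and> G2 i \<in> G" using x y by (auto simp: R2_def G2_def)
  then show ?thesis unfolding ideal_gen_def e by blast
qed

lemma ideal_gen_mult:
  assumes "\<And>a b. a \<in> R \<Longrightarrow> b \<in> R \<Longrightarrow> a * b \<in> R" "c \<in> R" "x \<in> ideal_gen R G"
  shows "c * x \<in> ideal_gen R G"
proof -
  from assms(3) obtain k :: nat and r g where x: "x = (\<Sum>i<k. r i * g i)" "\<forall>i<k. r i \<in> R \<and> g i \<in> G"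
    unfolding ideal_gen_def by blast
  have "c * x = (\<Sum>i<k. (c * r i) * g i)" using x by (simp add: sum_distrib_left mult.assoc)
  moreover have "\<forall>i<k. c * r i \<in> R \<and> g i \<in> G" using x assms by auto
  ultimately show ?thesis unfolding ideal_gen_def
    by (intro CollectI exI[of _ k] exI[of _ "\<lambda>i. c * r i"] exI[of _ g]) simp
qed

lemma ideal_gen_sum:
  assumes "finite S" "\<And>i. i \<in> S \<Longrightarrow> f i \<in> ideal_gen R G"
  shows "sum f S \<in> ideal_gen R G"
  using assms by (induction S rule: finite_induct) (auto intro: ideal_gen_add ideal_gen_zero)

lemma ideal_gen_subset:
  assumes "\<And>a b. a \<in> R \<Longrightarrow> b \<in> R \<Longrightarrow> a * b \<in> R" "\<And>a b. a \<in> R \<Longrightarrow> b \<in> R \<Longrightarrow> a + b \<in> R"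
    "0 \<in> R" "G \<subseteq> R"
  shows "ideal_gen R G \<subseteq> R"
proof
  fix x assume "x \<in> ideal_gen R G"
  then obtain k :: nat and r g where x: "x = (\<Sum>i<k. r i * g i)" "\<forall>i<k. r i \<in> R \<and> g i \<in> G"
    unfolding ideal_gen_def by blast
  have "(\<Sum>i\<in>{..<k}. r i * g i) \<in> R"
    using x(2) proof (induction k)
    case 0 then show ?case using assms by simp
  next
    case (Suc k) then show ?case using assms by auto
  qed
  then show "x \<in> R" using x by simp
qed

lemma polyring_add: "(a::'a::comm_ring_1 mpoly) \<in> polyring n \<Longrightarrow> b \<in> polyring n \<Longrightarrow> a + b \<in> polyring n"
  unfolding polyring_def using keys_add[of a b] by blast

lemma polyring_mult:
  assumes "(a::'a::comm_ring_1 mpoly) \<in> polyring n" "b \<in> polyring n"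
  shows "a * b \<in> polyring n"
  unfolding polyring_def mem_Collect_eq
proof
  fix m assume m: "m \<in> Poly_Mapping.keys (a * b)"
  then obtain x y where "m = x + y" "x \<in> Poly_Mapping.keys a" "y \<in> Poly_Mapping.keys b" using keys_mult by blast
  then show "Poly_Mapping.keys m \<subseteq> {1..n}" using assms keys_add[of x y] unfolding polyring_def by blast
qed

lemma polyring_zero: "0 \<in> polyring n"
  unfolding polyring_def by simp

lemma polyring_one: "1 \<in> polyring n"
  unfolding polyring_def by simp

lemma polyring_uminus: "a \<in> polyring n \<Longrightarrow> - a \<in> polyring n"
  unfolding polyring_def by simp

lemma polyring_single: "Poly_Mapping.keys m \<subseteq> {1..n} \<Longrightarrow> Poly_Mapping.single m c \<in> polyring n"
  unfolding polyring_def by simp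

lemma ideal_gen_polyring: "G \<subseteq> polyring n \<Longrightarrow> ideal_gen (polyring n) G \<subseteq> polyring n"
  by (rule ideal_gen_subset) (auto intro: polyring_add polyring_mult polyring_zero)

lemma ideal_pow_polyring: "I \<subseteq> polyring n \<Longrightarrow> ideal_pow (polyring n) I s \<subseteq> polyring n"
proof (induction s)
  case 0 then show ?case by simp
next
  case (Suc s)
  then show ?case unfolding ideal_pow.simps ideal_prod_def
    by (intro ideal_gen_polyring) (auto intro: polyring_mult)
qed

lemma ideal_pow_mult:
  assumes "x \<in> ideal_pow (polyring n) I s" "c \<in> polyring n"
  shows "c * x \<in> ideal_pow (polyring n) I s"
  using assms by (cases s) (auto intro: ideal_gen_mult polyring_mult simp: ideal_prod_def)

lemma ideal_pow_add:
  assumes "x \<in> ideal_pow (polyring n) I s" "y \<in> ideal_pow (polyring n) I s"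
  shows "x + y \<in> ideal_pow (polyring n) I s"
  using assms by (cases s) (auto intro: ideal_gen_add polyring_add simp: ideal_prod_def)

lemma ideal_pow_zero: "0 \<in> ideal_pow (polyring n) I s"
  by (cases s) (auto intro: ideal_gen_zero polyring_zero simp: ideal_prod_def)

lemma ideal_pow_sum:
  assumes "finite S" "\<And>i. i \<in> S \<Longrightarrow> f i \<in> ideal_pow (polyring n) I s"
  shows "sum f S \<in> ideal_pow (polyring n) I s"
  using assms by (induction S rule: finite_induct) (auto intro: ideal_pow_add ideal_pow_zero)

lemma ideal_pow_prod_mem:
  assumes "finite S" "\<And>i. i \<in> S \<Longrightarrow> g i \<in> I"
  shows "\<And>c r. sum c S = s \<Longrightarrow> r \<in> polyring n \<Longrightarrow> r * (\<Prod>i\<in>S. g i ^ c i) \<in> ideal_pow (polyring n) I s"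
proof (induction s)
  case 0
  then have "\<forall>i\<in>S. c i = 0" using assms(1) by simp
  then show ?case using 0 by simp
next
  case (Suc s)
  then obtain j where j: "j \<in> S" "c j > 0"
    by (metis gr0I sum.neutral nat.distinct(1))
  define c' where "c' = c(j := c j - 1)"
  have "sum c' S = s"
  proof -
    have "sum c S = c j + sum c (S - {j})" using j assms(1) by (simp add: sum.remove)
    moreover have "sum c' S = c' j + sum c' (S - {j})" using j assms(1) by (simp add: sum.remove)
    moreover have "sum c' (S - {j}) = sum c (S - {j})" by (rule sum.cong) (auto simp: c'_def)
    ultimately show ?thesis using Suc.prems j by (simp add: c'_def)
  qed
  then have IH: "r * (\<Prod>i\<in>S. g i ^ c' i) \<in> ideal_pow (polyring n) I s"
    using Suc by blast
  have "(\<Prod>i\<in>S. g i ^ c i) = g j ^ c j * (\<Prod>i\<in>S - {j}. g i ^ c i)"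
    using j assms(1) by (simp add: prod.remove)
  moreover have "(\<Prod>i\<in>S. g i ^ c' i) = g j ^ c' j * (\<Prod>i\<in>S - {j}. g i ^ c' i)"
    using j assms(1) by (simp add: prod.remove)
  moreover have "(\<Prod>i\<in>S - {j}. g i ^ c' i) = (\<Prod>i\<in>S - {j}. g i ^ c i)"
    by (rule prod.cong) (auto simp: c'_def)
  moreover have "g j ^ c j = g j ^ c' j * g j"
  proof -
    have "c j = Suc (c' j)" using j by (simp add: c'_def)
    then show ?thesis by (simp only: power_Suc2)
  qed
  ultimately have "r * (\<Prod>i\<in>S. g i ^ c i) = (r * (\<Prod>i\<in>S. g i ^ c' i)) * g j"
    by (simp add: ac_simps)
  moreover have "(r * (\<Prod>i\<in>S. g i ^ c' i)) * g j \<in> ideal_pow (polyring n) I (Suc s)"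
    unfolding ideal_pow.simps ideal_prod_def
    by (rule ideal_gen_gen[OF polyring_one]) (use IH assms(2) j in blast)
  ultimately show ?case by simp
qed



definition wt :: "nat \<Rightarrow> (nat \<Rightarrow> nat) \<Rightarrow> (nat \<Rightarrow>\<^sub>0 nat) \<Rightarrow> nat" where
  "wt n w a = (\<Sum>j\<le>n. w j * Poly_Mapping.lookup a j)"

definition wge :: "nat \<Rightarrow> (nat \<Rightarrow> nat) \<Rightarrow> nat \<Rightarrow> 'a::comm_ring_1 mpoly \<Rightarrow> bool" where
  "wge n w d p = (\<forall>a\<in>Poly_Mapping.keys p. d \<le> wt n w a)"

definition wle :: "nat \<Rightarrow> (nat \<Rightarrow> nat) \<Rightarrow> nat \<Rightarrow> 'a::comm_ring_1 mpoly \<Rightarrow> bool" where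
  "wle n w d p = (\<forall>a\<in>Poly_Mapping.keys p. wt n w a \<le> d)"

lemma wt_add: "wt n w (a + b) = wt n w a + wt n w b"
  unfolding wt_def by (simp add: lookup_add add_mult_distrib2 sum.distrib)

lemma wt_zero: "wt n w 0 = 0"
  unfolding wt_def by simp

lemma wge_0: "wge n w 0 p" unfolding wge_def by simp
lemma wge_zero: "wge n w d 0" unfolding wge_def by simp
lemma wge_mono: "wge n w d p \<Longrightarrow> d' \<le> d \<Longrightarrow> wge n w d' p" unfolding wge_def by force
lemma wge_add: "wge n w d p \<Longrightarrow> wge n w d q \<Longrightarrow> wge n w d (p + q)"
  unfolding wge_def using keys_add[of p q] by blast
lemma wge_uminus: "wge n w d p \<Longrightarrow> wge n w d (- p)"
  unfolding wge_def by simp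
lemma wge_mult: "wge n w d p \<Longrightarrow> wge n w e q \<Longrightarrow> wge n w (d + e) (p * q)"
  unfolding wge_def
proof
  fix m assume a: "\<forall>a\<in>Poly_Mapping.keys p. d \<le> wt n w a" "\<forall>a\<in>Poly_Mapping.keys q. e \<le> wt n w a"
    and m: "m \<in> Poly_Mapping.keys (p * q)"
  then obtain x y where "m = x + y" "x \<in> Poly_Mapping.keys p" "y \<in> Poly_Mapping.keys q" using keys_mult by blast
  then show "d + e \<le> wt n w m" using a by (simp add: wt_add add_mono)
qed
lemma wge_sum: "finite S \<Longrightarrow> (\<And>i. i \<in> S \<Longrightarrow> wge n w d (f i)) \<Longrightarrow> wge n w d (sum f S)"
  by (induction S rule: finite_induct) (auto intro: wge_add wge_zero)
lemma wge_power: "wge n w d p \<Longrightarrow> wge n w (k * d) (p ^ k)"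
proof (induction k)
  case 0 then show ?case by (simp add: wge_0)
next
  case (Suc k) then show ?case using wge_mult[of n w d p "k*d" "p^k"] by (simp add: add.commute)
qed

lemma wle_mult: "wle n w d p \<Longrightarrow> wle n w e q \<Longrightarrow> wle n w (d + e) (p * q)"
  unfolding wle_def
proof
  fix m assume a: "\<forall>a\<in>Poly_Mapping.keys p. wt n w a \<le> d" "\<forall>a\<in>Poly_Mapping.keys q. wt n w a \<le> e"
    and m: "m \<in> Poly_Mapping.keys (p * q)"
  then obtain x y where "m = x + y" "x \<in> Poly_Mapping.keys p" "y \<in> Poly_Mapping.keys q" using keys_mult by blast
  then show "wt n w m \<le> d + e" using a by (simp add: wt_add add_mono)
qed
lemma wle_power: "wle n w d p \<Longrightarrow> wle n w (k * d) (p ^ k)"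
proof (induction k)
  case 0 then show ?case by (simp add: wle_def wt_zero)
next
  case (Suc k) then show ?case using wle_mult[of n w d p "k*d" "p^k"] by (simp add: add.commute)
qed

lemma ideal_gen_wge:
  assumes "\<forall>g\<in>G. wge n w e g" "x \<in> ideal_gen R G"
  shows "wge n w e x"
proof -
  from assms(2) obtain k :: nat and r g where x: "x = (\<Sum>i<k. r i * g i)" "\<forall>i<k. r i \<in> R \<and> g i \<in> G"
    unfolding ideal_gen_def by blast
  show ?thesis unfolding x(1)
  proof (rule wge_sum)
    fix i assume "i \<in> {..<k}"
    then have "g i \<in> G" using x(2) by auto
    then have "wge n w e (g i)" using assms(1) by blast
    then have "wge n w (0 + e) (r i * g i)" by (rule wge_mult[OF wge_0])
    then show "wge n w e (r i * g i)" by simp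
  qed simp
qed

lemma ideal_pow_wge:
  assumes "\<forall>g\<in>I. wge n w e g"
  shows "x \<in> ideal_pow R I k \<Longrightarrow> wge n w (k * e) x"
proof (induction k arbitrary: x)
  case 0 then show ?case by (simp add: wge_0)
next
  case (Suc k)
  have "\<forall>g\<in>{a * b |a b. a \<in> ideal_pow R I k \<and> b \<in> I}. wge n w (Suc k * e) g"
  proof
    fix g assume "g \<in> {a * b |a b. a \<in> ideal_pow R I k \<and> b \<in> I}"
    then obtain a b where g: "g = a * b" "a \<in> ideal_pow R I k" "b \<in> I" by blast
    have "wge n w (k * e + e) (a * b)" using wge_mult[OF Suc.IH[OF g(2)]] assms g(3) by blast
    then show "wge n w (Suc k * e) g" using g(1) by (simp add: add.commute)
  qed
  then show ?case using Suc.prems unfolding ideal_pow.simps ideal_prod_def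
    by (rule ideal_gen_wge)
qed

lemma integral_bound:
  fixes f :: "'k::field mpoly"
  assumes m: "1 \<le> m"
    and eq: "f ^ m + (\<Sum>i=1..m. A i * f ^ (m - i)) = 0"
    and A: "\<forall>i\<in>{1..m}. wge n w (i * E) (A i)"
    and b: "b \<in> Poly_Mapping.keys f"
  shows "E \<le> wt n w b"
proof -
  let ?W = "wt n w"
  have fin: "finite (Poly_Mapping.keys f)" by simp
  have ne: "Poly_Mapping.keys f \<noteq> {}" using b by auto
  define d where "d = Min (?W ` Poly_Mapping.keys f)"
  have db: "d \<le> ?W b" unfolding d_def using fin b by simp
  have "d \<in> ?W ` Poly_Mapping.keys f" unfolding d_def by (rule Min_in) (use fin ne in auto)
  then obtain a0 where a0: "a0 \<in> Poly_Mapping.keys f" "?W a0 = d" by blast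
  have wgef: "wge n w d f" unfolding wge_def d_def using fin by simp
  show ?thesis
  proof (rule ccontr)
    assume "\<not> E \<le> ?W b"
    then have dE: "d + 1 \<le> E" using db by simp
    define f0 where "f0 = (\<Sum>a\<in>{a\<in>Poly_Mapping.keys f. ?W a = d}. Poly_Mapping.single a (Poly_Mapping.lookup f a))"
    have lf0: "Poly_Mapping.lookup f0 x = (if x \<in> Poly_Mapping.keys f \<and> ?W x = d then Poly_Mapping.lookup f x else 0)" for x
      unfolding f0_def lookup_sum by (simp add: lookup_single when_def)
    have wle0: "wle n w d f0" unfolding wle_def
      using lf0 by (metis in_keys_iff order_refl)
    have wge0: "wge n w d f0" unfolding wge_def
      using lf0 by (metis in_keys_iff order_refl)
    have f0nz: "f0 \<noteq> 0"
    proof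
      assume "f0 = 0"
      then have "Poly_Mapping.lookup f0 a0 = 0" by simp
      then show False using lf0[of a0] a0 by (simp add: in_keys_iff)
    qed
    define f1 where "f1 = f - f0"
    have wge1: "wge n w (d + 1) f1" unfolding wge_def
    proof
      fix x assume "x \<in> Poly_Mapping.keys f1"
      then have "Poly_Mapping.lookup f x - Poly_Mapping.lookup f0 x \<noteq> 0"
        unfolding f1_def by (simp add: in_keys_iff lookup_minus)
      then have "x \<in> Poly_Mapping.keys f" "?W x \<noteq> d" using lf0[of x] by (auto simp: in_keys_iff split: if_splits)
      moreover have "d \<le> ?W x" using calculation(1) wgef unfolding wge_def by blast
      ultimately show "d + 1 \<le> ?W x" by simp
    qed
    have pnz: "f0 ^ m \<noteq> 0" using f0nz by simp
    then obtain b0 where b0: "b0 \<in> Poly_Mapping.keys (f0 ^ m)"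
      by (metis keys_eq_empty ex_in_conv)
    have Wb0: "?W b0 = m * d"
      using b0 wle_power[OF wle0, of m] wge_power[OF wge0, of m] unfolding wle_def wge_def
      by (meson le_antisym)
    have diff: "f ^ m - f0 ^ m = f1 * (\<Sum>i<m. f0 ^ (m - Suc i) * f ^ i)"
      unfolding f1_def by (rule power_diff_sumr2)
    have "wge n w (m * d + 1) (f ^ m - f0 ^ m)"
    proof -
      have "wge n w ((m - 1) * d) (\<Sum>i<m. f0 ^ (m - Suc i) * f ^ i)"
      proof (rule wge_sum)
        fix i assume "i \<in> {..<m}"
        then have "m - Suc i + i = m - 1" by simp
        then have e: "(m - Suc i) * d + i * d = (m - 1) * d"
          using add_mult_distrib[of "m - Suc i" i d] by simp
        show "wge n w ((m - 1) * d) (f0 ^ (m - Suc i) * f ^ i)"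
          using wge_mult[OF wge_power[OF wge0] wge_power[OF wgef], of "m - Suc i" i] e by simp
      qed simp
      from wge_mult[OF wge1 this] have "wge n w (d + 1 + (m - 1) * d) (f ^ m - f0 ^ m)"
        using diff by simp
      moreover have "d + 1 + (m - 1) * d = m * d + 1" using m
        by (cases m) simp_all
      ultimately show ?thesis by simp
    qed
    then have "b0 \<notin> Poly_Mapping.keys (f ^ m - f0 ^ m)" using Wb0 unfolding wge_def by fastforce
    then have "Poly_Mapping.lookup (f ^ m) b0 = Poly_Mapping.lookup (f0 ^ m) b0"
      by (simp add: in_keys_iff lookup_minus)
    then have b0f: "b0 \<in> Poly_Mapping.keys (f ^ m)" using b0 by (simp add: in_keys_iff)
    have fm: "f ^ m = - (\<Sum>i=1..m. A i * f ^ (m - i))" using eq by (simp add: eq_neg_iff_add_eq_0)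
    have "wge n w (m * d + 1) (\<Sum>i=1..m. A i * f ^ (m - i))"
    proof (rule wge_sum)
      fix i assume i: "i \<in> {1..m}"
      have "wge n w (i * E + (m - i) * d) (A i * f ^ (m - i))"
        using wge_mult[OF _ wge_power[OF wgef]] A i by blast
      moreover have "m * d + 1 \<le> i * E + (m - i) * d"
      proof -
        have "i * (d + 1) \<le> i * E" using dE by (rule mult_le_mono2)
        moreover have "i * (d + 1) + (m - i) * d = m * d + i"
        proof -
          have "i + (m - i) = m" using i by simp
          then have h: "i * d + (m - i) * d = m * d" using add_mult_distrib[of i "m - i" d] by simp
          have "i * (d + 1) = i * d + i" by simp
          then show ?thesis using h by linarith
        qed
        ultimately show ?thesis using i by simp
      qed
      ultimately show "wge n w (m * d + 1) (A i * f ^ (m - i))" by (rule wge_mono)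
    qed simp
    then have "wge n w (m * d + 1) (f ^ m)" using fm wge_uminus by metis
    then show False using b0f Wb0 unfolding wge_def by fastforce
  qed
qed



lemma tele:
  fixes C :: "nat \<Rightarrow> nat"
  assumes "\<And>i. C i \<le> C (Suc i)" "l \<le> u"
  shows "(\<Sum>i\<in>{l<..u}. C i - C (i - 1)) = C u - C l"
  using assms(2)
proof (induction u)
  case 0 then show ?case by simp
next
  case (Suc u)
  show ?case
  proof (cases "l = Suc u")
    case True then show ?thesis by simp
  next
    case False
    then have lu: "l \<le> u" using Suc.prems by simp
    have "{l<..Suc u} = insert (Suc u) {l<..u}" using lu by auto
    then have "(\<Sum>i\<in>{l<..Suc u}. C i - C (i - 1)) = (C (Suc u) - C u) + (C u - C l)"
      using Suc.IH[OF lu] by simp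
    moreover have "C l \<le> C u" using lu assms(1) by (simp add: lift_Suc_mono_le)
    moreover have "C u \<le> C (Suc u)" using assms(1) by simp
    ultimately show ?thesis by simp
  qed
qed

lemma packing:
  fixes a :: "nat \<Rightarrow> nat" and n t s :: nat
  assumes t: "1 \<le> t" "t \<le> n"
    and hyp: "\<And>P. P \<subseteq> {1..n} \<Longrightarrow> (\<forall>i\<in>{1..n-t+1}. \<exists>p\<in>P. i \<le> p \<and> p \<le> i + t - 1) \<Longrightarrow> s \<le> sum a P"
  shows "\<exists>c. sum c {1..n-t+1} = s \<and>
     (\<forall>j. (\<Sum>i\<in>{1..n-t+1}. if i \<le> j \<and> j \<le> i + t - 1 then c i else 0) \<le> a j)"
proof -
  define N where "N = n - t + 1"
  define hits where "hits j P \<longleftrightarrow> (\<forall>i. 1 \<le> i \<longrightarrow> i + t - 1 \<le> j \<longrightarrow> i \<le> N \<longrightarrow> (\<exists>p\<in>P. i \<le> p \<and> p \<le> i + t - 1))" for j P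
  define Q where "Q j v \<longleftrightarrow> (\<exists>P. P \<subseteq> {1..n} \<and> hits j P \<and> v = sum a P)" for j v
  define H where "H j = Least (Q j)" for j
  have ex: "Q j (sum a {1..n})" for j
    unfolding Q_def
  proof (intro exI[of _ "{1..n}"] conjI)
    show "hits j {1..n}" unfolding hits_def N_def
    proof (intro allI impI)
      fix i assume "1 \<le> i" "i + t - 1 \<le> j" "i \<le> n - t + 1"
      then show "\<exists>p\<in>{1..n}. i \<le> p \<and> p \<le> i + t - 1" using t by (intro bexI[of _ i]) auto
    qed
  qed simp_all
  have H_le: "H j \<le> sum a P" if "P \<subseteq> {1..n}" "hits j P" for j P
  proof -
    have "Q j (sum a P)" unfolding Q_def using that by blast
    then show ?thesis unfolding H_def by (rule Least_le)
  qed
  have H_ex: "\<exists>P. P \<subseteq> {1..n} \<and> hits j P \<and> H j = sum a P" for j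
  proof -
    have "Q j (H j)" unfolding H_def by (rule LeastI[of "Q j", OF ex])
    then show ?thesis unfolding Q_def by blast
  qed
  have H_mono: "H j \<le> H j'" if "j \<le> j'" for j j'
  proof -
    obtain P where P: "P \<subseteq> {1..n}" "hits j' P" "H j' = sum a P" using H_ex by blast
    have "hits j P" using P(2) that unfolding hits_def by auto
    then show ?thesis using H_le P by simp
  qed
  have H0: "H (t - 1) = 0"
  proof -
    have "hits (t - 1) {}" using t unfolding hits_def by auto
    then show ?thesis using H_le[of "{}" "t - 1"] by simp
  qed
  have H_step: "H (j + t - 1) \<le> H (j - 1) + a j" if "1 \<le> j" "j \<le> n" for j
  proof -
    obtain P where P: "P \<subseteq> {1..n}" "hits (j - 1) P" "H (j - 1) = sum a P" using H_ex by blast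
    have "insert j P \<subseteq> {1..n}" using P that by auto
    moreover have "hits (j + t - 1) (insert j P)"
      unfolding hits_def
    proof (intro allI impI)
      fix i assume i: "1 \<le> i" "i + t - 1 \<le> j + t - 1" "i \<le> N"
      show "\<exists>p\<in>insert j P. i \<le> p \<and> p \<le> i + t - 1"
      proof (cases "i + t - 1 \<le> j - 1")
        case True then show ?thesis using P(2) i unfolding hits_def by blast
      next
        case False then show ?thesis using i t by (intro bexI[of _ j]) auto
      qed
    qed
    ultimately have "H (j + t - 1) \<le> sum a (insert j P)" by (rule H_le)
    also have "\<dots> \<le> a j + sum a P"
      using P(1) finite_subset[OF P(1)] by (simp add: sum.insert_if)
    finally show ?thesis using P(3) by simp
  qed
  have Hn: "s \<le> H n"
  proof -
    obtain P where P: "P \<subseteq> {1..n}" "hits n P" "H n = sum a P" using H_ex by blast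
    have "\<forall>i\<in>{1..n-t+1}. \<exists>p\<in>P. i \<le> p \<and> p \<le> i + t - 1"
      using P(2) t unfolding hits_def N_def by auto
    then show ?thesis using hyp P by simp
  qed
  define C where "C i = min (H (i + t - 1)) s" for i
  define c where "c i = C i - C (i - 1)" for i
  have Cmono: "C i \<le> C (Suc i)" for i unfolding C_def using H_mono[of "i + t - 1" "Suc i + t - 1"] by auto
  have Cmono': "C i \<le> C i'" if "i \<le> i'" for i i' using Cmono that by (simp add: lift_Suc_mono_le)
  have C0: "C 0 = 0" unfolding C_def using H0 by simp
  have CN: "C N = s" unfolding C_def N_def using Hn t by (simp add: min_def)
  have tot: "sum c {1..N} = s"
  proof -
    have "{1..N} = {0<..N}" by auto
    then show ?thesis unfolding c_def using tele[of C 0 N, OF Cmono] C0 CN by simp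
  qed
  have cov: "(\<Sum>i\<in>{1..N}. if i \<le> j \<and> j \<le> i + t - 1 then c i else 0) \<le> a j" for j
  proof -
    have eqs: "(\<Sum>i\<in>{1..N}. if i \<le> j \<and> j \<le> i + t - 1 then c i else 0) = sum c {i\<in>{1..N}. i \<le> j \<and> j \<le> i + t - 1}"
      using sum.inter_filter[of "{1..N}" c "\<lambda>i. i \<le> j \<and> j \<le> i + t - 1"] by simp
    show ?thesis
    proof (cases "1 \<le> j \<and> j \<le> n")
      case False
      then have E: "{i\<in>{1..N}. i \<le> j \<and> j \<le> i + t - 1} = {}" unfolding N_def using t by auto
      show ?thesis unfolding eqs E by simp
    next
      case True
      define l where "l = j - t"
      define u where "u = min j N"
      have set: "{i\<in>{1..N}. i \<le> j \<and> j \<le> i + t - 1} = {l<..u}"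
        unfolding l_def u_def using t True by auto
      have lu: "l \<le> u" unfolding l_def u_def N_def using True t by auto
      have "sum c {l<..u} = C u - C l" unfolding c_def by (rule tele[of C, OF Cmono lu])
      also have "\<dots> \<le> C j - C l" using Cmono'[of u j] unfolding u_def by simp
      also have "\<dots> \<le> a j"
      proof (cases "t \<le> j")
        case True2: True
        have "l + t - 1 = j - 1" unfolding l_def using True2 t by simp
        then have "C l = min (H (j - 1)) s" unfolding C_def by simp
        moreover have "C j = min (H (j + t - 1)) s" unfolding C_def by simp
        moreover have "H (j + t - 1) \<le> H (j - 1) + a j" using H_step True by simp
        moreover have "H (j - 1) \<le> H (j + t - 1)" using H_mono by simp
        ultimately show ?thesis by (simp add: min_def) linarith
      next
        case False2: False
        then have "l = 0" unfolding l_def by simp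
        moreover have "H (j - 1) = 0" using H_mono[of "j - 1" "t - 1"] H0 False2 by simp
        moreover have "C j \<le> H (j + t - 1)" unfolding C_def by simp
        ultimately show ?thesis using H_step[of j] True C0 by simp
      qed
      finally show ?thesis unfolding eqs set .
    qed
  qed
  show ?thesis using tot cov unfolding N_def by blast
qed



definition ee :: "nat \<Rightarrow> nat \<Rightarrow> (nat \<Rightarrow>\<^sub>0 nat)" where
  "ee t i = (\<Sum>j\<in>{i..i+t-1}. Poly_Mapping.single j 1)"

lemma lookup_ee: "Poly_Mapping.lookup (ee t i) j = (if i \<le> j \<and> j \<le> i + t - 1 then 1 else 0)"
  unfolding ee_def lookup_sum by (simp add: lookup_single when_def)

lemma prod_single:
  "finite S \<Longrightarrow> (\<Prod>j\<in>S. Poly_Mapping.single (f j) (1::'a::comm_ring_1)) = Poly_Mapping.single (\<Sum>j\<in>S. f j) 1"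
  by (induction S rule: finite_induct) (simp_all add: mult_single)

lemma gen_eq: "(\<Prod>j\<in>{i..i+t-1}. Var j :: 'a::comm_ring_1 mpoly) = Poly_Mapping.single (ee t i) 1"
  unfolding Var_def ee_def by (rule prod_single) simp

lemma pow_single: "\<exists>b. (Poly_Mapping.single a (1::'a::comm_ring_1)) ^ k = Poly_Mapping.single b 1 \<and>
    (\<forall>j. Poly_Mapping.lookup b j = k * Poly_Mapping.lookup a j)"
proof (induction k)
  case 0 then show ?case by (intro exI[of _ 0]) simp
next
  case (Suc k)
  then obtain b where b: "Poly_Mapping.single a (1::'a) ^ k = Poly_Mapping.single b 1"
    "\<forall>j. Poly_Mapping.lookup b j = k * Poly_Mapping.lookup a j" by blast
  show ?case using b
    by (intro exI[of _ "a + b"]) (simp add: mult_single lookup_add)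
qed

lemma prod_pow_single:
  assumes "finite S"
  shows "\<exists>E. (\<Prod>i\<in>S. (Poly_Mapping.single (g i) (1::'a::comm_ring_1)) ^ c i) = Poly_Mapping.single E 1 \<and>
    (\<forall>j. Poly_Mapping.lookup E j = (\<Sum>i\<in>S. c i * Poly_Mapping.lookup (g i) j))"
  using assms
proof (induction S rule: finite_induct)
  case empty then show ?case by (intro exI[of _ 0]) simp
next
  case (insert x S)
  then obtain E where E: "(\<Prod>i\<in>S. (Poly_Mapping.single (g i) (1::'a)) ^ c i) = Poly_Mapping.single E 1"
    "\<forall>j. Poly_Mapping.lookup E j = (\<Sum>i\<in>S. c i * Poly_Mapping.lookup (g i) j)" by blast
  obtain b where b: "(Poly_Mapping.single (g x) (1::'a)) ^ c x = Poly_Mapping.single b 1"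
    "\<forall>j. Poly_Mapping.lookup b j = c x * Poly_Mapping.lookup (g x) j" using pow_single by blast
  show ?case using insert E b
    by (intro exI[of _ "b + E"]) (simp add: mult_single lookup_add)
qed

lemma gens_mem:
  assumes "1 \<le> i" "i \<le> n - t + 1"
  shows "Poly_Mapping.single (ee t i) (1::'a::comm_ring_1) \<in> path_ideal n t"
proof -
  have "Poly_Mapping.single (ee t i) (1::'a) \<in> path_gens n t"
    unfolding path_gens_def gen_eq[symmetric] using assms by blast
  then show ?thesis unfolding path_ideal_def by (rule ideal_gen_gen[OF polyring_one])
qed

lemma keys_ee: "1 \<le> i \<Longrightarrow> i \<le> n - t + 1 \<Longrightarrow> 1 \<le> t \<Longrightarrow> t \<le> n \<Longrightarrow> Poly_Mapping.keys (ee t i) \<subseteq> {1..n}"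
  by (auto simp: in_keys_iff lookup_ee split: if_splits)

lemma path_ideal_polyring:
  assumes "1 \<le> t" "t \<le> n"
  shows "path_ideal n t \<subseteq> (polyring n :: 'a::comm_ring_1 mpoly set)"
  unfolding path_ideal_def
proof (rule ideal_gen_polyring)
  show "path_gens n t \<subseteq> (polyring n :: 'a mpoly set)"
    unfolding path_gens_def gen_eq using keys_ee[OF _ _ assms] polyring_single by blast
qed

lemma path_ideal_wge:
  assumes "1 \<le> t" "t \<le> n" "\<forall>i\<in>{1..n-t+1}. 1 \<le> wt n w (ee t i)"
  shows "\<forall>g\<in>(path_ideal n t :: 'a::comm_ring_1 mpoly set). wge n w 1 g"
  unfolding path_ideal_def
proof
  fix g :: "'a mpoly" assume g: "g \<in> ideal_gen (polyring n) (path_gens n t)"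
  have "\<forall>h\<in>(path_gens n t :: 'a mpoly set). wge n w 1 h"
    unfolding path_gens_def gen_eq wge_def using assms(3) by auto
  then show "wge n w 1 g" using g by (rule ideal_gen_wge)
qed

lemma monomial_mem:
  fixes n t s :: nat
  assumes t: "1 \<le> t" "t \<le> n"
    and keys: "Poly_Mapping.keys a \<subseteq> {1..n}"
    and hyp: "\<And>w. \<forall>i\<in>{1..n-t+1}. 1 \<le> wt n w (ee t i) \<Longrightarrow> s \<le> wt n w a"
  shows "Poly_Mapping.single a (1::'a::comm_ring_1) \<in> ideal_pow (polyring n) (path_ideal n t) s"
proof -
  define N where "N = n - t + 1"
  have "\<exists>c. sum c {1..n-t+1} = s \<and>
     (\<forall>j. (\<Sum>i\<in>{1..n-t+1}. if i \<le> j \<and> j \<le> i + t - 1 then c i else 0) \<le> Poly_Mapping.lookup a j)"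
  proof (rule packing[OF t])
    fix P assume P: "P \<subseteq> {1..n}" "\<forall>i\<in>{1..n-t+1}. \<exists>p\<in>P. i \<le> p \<and> p \<le> i + t - 1"
    define w where "w j = (if j \<in> P then 1 else 0 :: nat)" for j
    have "\<forall>i\<in>{1..n-t+1}. 1 \<le> wt n w (ee t i)"
    proof
      fix i assume i: "i \<in> {1..n-t+1}"
      then obtain p where p: "p \<in> P" "i \<le> p" "p \<le> i + t - 1" using P by blast
      have "p \<in> {..n}" using p P by auto
      then have "w p * Poly_Mapping.lookup (ee t i) p \<le> wt n w (ee t i)"
        unfolding wt_def by (rule member_le_sum) auto
      then show "1 \<le> wt n w (ee t i)" using p by (simp add: w_def lookup_ee)
    qed
    then have "s \<le> wt n w a" by (rule hyp)
    also have "wt n w a = sum (Poly_Mapping.lookup a) P"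
    proof -
      have "wt n w a = (\<Sum>j\<in>{..n}. if j \<in> P then Poly_Mapping.lookup a j else 0)"
        unfolding wt_def w_def by (rule sum.cong) auto
      also have "\<dots> = sum (Poly_Mapping.lookup a) ({..n} \<inter> P)"
        by (simp add: sum.inter_restrict)
      also have "{..n} \<inter> P = P" using P by auto
      finally show ?thesis .
    qed
    finally show "s \<le> sum (Poly_Mapping.lookup a) P" .
  qed
  then obtain c where c: "sum c {1..N} = s"
    "\<forall>j. (\<Sum>i\<in>{1..N}. if i \<le> j \<and> j \<le> i + t - 1 then c i else 0) \<le> Poly_Mapping.lookup a j"
    unfolding N_def by blast
  obtain E where E: "(\<Prod>i\<in>{1..N}. (Poly_Mapping.single (ee t i) (1::'a)) ^ c i) = Poly_Mapping.single E 1"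
    "\<forall>j. Poly_Mapping.lookup E j = (\<Sum>i\<in>{1..N}. c i * Poly_Mapping.lookup (ee t i) j)"
    using prod_pow_single[of "{1..N}" "ee t" c] by auto
  have Ele: "Poly_Mapping.lookup E j \<le> Poly_Mapping.lookup a j" for j
  proof -
    have "Poly_Mapping.lookup E j = (\<Sum>i\<in>{1..N}. if i \<le> j \<and> j \<le> i + t - 1 then c i else 0)"
      using E(2) by (simp add: lookup_ee if_distrib cong: if_cong)
    then show ?thesis using c(2) by simp
  qed
  define r where "r = a - E"
  have aE: "a = r + E"
    unfolding r_def by (rule poly_mapping_eqI) (use Ele in \<open>simp add: lookup_add lookup_minus\<close>)
  have rk: "Poly_Mapping.keys r \<subseteq> {1..n}"
    using keys unfolding r_def by (auto simp: in_keys_iff lookup_minus)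
  have "Poly_Mapping.single a (1::'a) = Poly_Mapping.single r 1 * (\<Prod>i\<in>{1..N}. (Poly_Mapping.single (ee t i) (1::'a)) ^ c i)"
    using E(1) aE by (simp add: mult_single)
  also have "\<dots> \<in> ideal_pow (polyring n) (path_ideal n t) s"
    by (rule ideal_pow_prod_mem) (use c(1) gens_mem polyring_single[OF rk] in \<open>auto simp: N_def\<close>)
  finally show ?thesis .
qed

lemma poly_expand: "f = (\<Sum>a\<in>Poly_Mapping.keys f. Poly_Mapping.single a (Poly_Mapping.lookup f a))"
proof (rule poly_mapping_eqI)
  fix k
  show "Poly_Mapping.lookup f k = Poly_Mapping.lookup (\<Sum>a\<in>Poly_Mapping.keys f. Poly_Mapping.single a (Poly_Mapping.lookup f a)) k"
    unfolding lookup_sum by (simp add: lookup_single when_def in_keys_iff)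
qed

theorem corollary2p4:
  fixes n t s :: nat
  assumes "1 \<le> t" and "t \<le> n" and "1 \<le> s"
  shows "int_closure (polyring n) (ideal_pow (polyring n) (path_ideal n t :: 'k::field mpoly set) s)
         = ideal_pow (polyring n) (path_ideal n t) s"
proof
  let ?R = "polyring n :: 'k mpoly set"
  let ?I = "path_ideal n t :: 'k mpoly set"
  let ?J = "ideal_pow ?R ?I s"
  have IR: "?I \<subseteq> ?R" using path_ideal_polyring assms by blast
  have JR: "?J \<subseteq> ?R" using ideal_pow_polyring[OF IR] .
  show "?J \<subseteq> int_closure ?R ?J"
  proof
    fix f assume f: "f \<in> ?J"
    have "- f \<in> ideal_pow ?R ?J 1"
    proof -
      have "1 * f \<in> {a * b |a b. a \<in> ideal_pow ?R ?J 0 \<and> b \<in> ?J}"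
        using f polyring_one by fastforce
      then have "1 * f \<in> ideal_pow ?R ?J 1"
        unfolding One_nat_def ideal_pow.simps ideal_prod_def by (rule ideal_gen_gen[OF polyring_one])
      then have "(- 1) * (1 * f) \<in> ideal_pow ?R ?J 1"
        by (rule ideal_pow_mult) (rule polyring_uminus[OF polyring_one])
      then show ?thesis by simp
    qed
    then show "f \<in> int_closure ?R ?J"
      unfolding int_closure_def using f JR
      by (intro CollectI conjI exI[of _ 1] exI[of _ "\<lambda>_. - f"]) auto
  qed
next
  let ?R = "polyring n :: 'k mpoly set"
  let ?I = "path_ideal n t :: 'k mpoly set"
  let ?J = "ideal_pow ?R ?I s"
  show "int_closure ?R ?J \<subseteq> ?J"
  proof
    fix f assume "f \<in> int_closure ?R ?J"
    then obtain m A where fR: "f \<in> ?R" and m: "1 \<le> m"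
      and A: "\<forall>i\<in>{1..m}. A i \<in> ideal_pow ?R ?J i"
      and eq: "f ^ m + (\<Sum>i=1..m. A i * f ^ (m - i)) = 0"
      unfolding int_closure_def by blast
    have mono: "Poly_Mapping.single a (1::'k) \<in> ?J" if a: "a \<in> Poly_Mapping.keys f" for a
    proof (rule monomial_mem[OF assms(1,2)])
      show "Poly_Mapping.keys a \<subseteq> {1..n}" using fR a unfolding polyring_def by blast
      fix w assume w: "\<forall>i\<in>{1..n-t+1}. 1 \<le> wt n w (ee t i)"
      have wI: "\<forall>g\<in>?I. wge n w 1 g" using path_ideal_wge[OF assms(1,2) w] .
      have wJ: "\<forall>g\<in>?J. wge n w (s * 1) g" using ideal_pow_wge[OF wI] by blast
      have "\<forall>i\<in>{1..m}. wge n w (i * s) (A i)"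
        using A ideal_pow_wge[OF wJ] by (metis mult.right_neutral)
      then show "s \<le> wt n w a" by (rule integral_bound[OF m eq _ a])
    qed
    have "f = (\<Sum>a\<in>Poly_Mapping.keys f. Poly_Mapping.single a (Poly_Mapping.lookup f a))"
      by (rule poly_expand)
    also have "\<dots> \<in> ?J"
    proof (rule ideal_pow_sum)
      fix a assume a: "a \<in> Poly_Mapping.keys f"
      have "Poly_Mapping.single a (Poly_Mapping.lookup f a) =
          Poly_Mapping.single 0 (Poly_Mapping.lookup f a) * Poly_Mapping.single a 1"
        by (simp add: mult_single)
      also have "\<dots> \<in> ?J"
        by (rule ideal_pow_mult[OF mono[OF a]]) (rule polyring_single, simp)
      finally show "Poly_Mapping.single a (Poly_Mapping.lookup f a) \<in> ?J" .
    qed simp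
    finally show "f \<in> ?J" .
  qed
qed

end
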